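(* Assume (A2)–(A6), with the Gaussian variables $U_{ik,\xi}$, $U_{ij,\varepsilon}$ and constants $\beta_1,\beta_2\in(0,1/2)$ from (A5). Then $$\max_{1\le k\le k_n}\max_{1\le\ell\le J_s+p}\Big|\frac{1}{nN}\sum_{i=1}^n(\xi_{ik}-U_{ik,\xi})\Big\{\sum_{j=1}^NB_{\ell,p}(j/N)\sigma(j/N)(\varepsilon_{ij}-U_{ij,\varepsilon})\Big\}\Big|=O_{a.s.}(n^{\beta_1}N^{\beta_2-1}).$$
   Context: Standing setup. Observed data follow $Y_{ij}=m(j/N)+Z_i(j/N)+\sigma(j/N)\varepsilon_{ij}$, $1\le i\le n$, $1\le j\le N$, with $Z_i(x)=\sum_{k\ge1}\xi_{ik}\phi_k(x)$, $x\in[0,1]$; $\phi_k=\sqrt{\lambda_k}\psi_k$ with $\lambda_k,\psi_k$ the eigenvalues/orthonormal eigenfunctions of $G(x,x')=\mathrm{Cov}\{Z_1(x),Z_1(x')\}$; for each $i$ the $\{\xi_{ik}\}_k$ are uncorrelated, mean $0$, variance $1$, i.i.d. across $i$; $\varepsilon_{ij}$ i.i.d. mean $0$ variance $1$, independent of the $Z_i$; $G(x,x')=C(|x-x'|)$; $h_0\in(0,1)$ fixed. Spline order $p$; $\{B_{\ell,p}\}_{\ell=1}^{J_s+p}$ is the $p$th order B-spline basis with interior knots $t_\ell=\ell/(J_s+1)$. Hölder space $\mathcal H^{(q,\mu)}[0,1]$: functions with $\|\varphi\|_{q,\mu}=\sup_{x\ne y}|\varphi^{(q)}(x)-\varphi^{(q)}(y)|/|x-y|^\mu<\infty$;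 $\|\varphi\|_\infty=\sup|\varphi|$. Here $p^*=q+\mu$ for an integer $q>0$ and $\mu\in(0,1]$ (the smoothness of $m$ in (A1)). Assumptions: (A2) $\sigma\in\mathcal H^{(0,\nu)}[0,1]$, $\nu\in(0,1]$; $\sup\sigma\le M_\sigma$, $\sup_{[0,h_0]}|C|\le M_0$. (A3) $n\to\infty$ as $N\to\infty$, $n=O(N^\theta)$, $\theta>0$. (A4) $\phi_k\in\mathcal H^{(q,\mu)}$, $\sum_k\|\phi_k\|_{q,\mu}<\infty$, $\sum_k\|\phi_k\|_\infty<\infty$; increasing integers $k_n$ with $\sum_{k>k_n}\|\phi_k\|_\infty=o(n^{-1/2})$, $k_n=O(n^\omega)$, $\omega>0$. (A5) Constants $c_1,c_2>0$, $\gamma_1,\gamma_2>1$, $\beta_1,\beta_2\in(0,1/2)$ and i.i.d. $N(0,1)$ variables $\{U_{ij,\varepsilon}\},\{U_{ik,\xi}\}$ with $\min\{\frac{2(1-\beta_2)p^*}{3+(1+\beta_1)p^*},\frac{2(\nu-\beta_2)}{1+\beta_1}\}>\theta$, $\Pr\{\max_{k\le k_n}\max_{t\le n}|\sum_{i\le t}(\xi_{ik}-U_{ik,\xi})|>n^{\beta_1}\}<c_1n^{-\gamma_1}$ and $\Pr\{\max_{i\le n}\max_{t\le N}|\sum_{j\le t}(\varepsilon_{ij}-U_{ij,\varepsilon})|>N^{\beta_2}\}<c_2N^{-\gamma_2}$. (A6) $p\ge p^*$; $J_s\asymp N^\gamma d_N$, $d_N+d_N^{-1}=O(\log^\tau N)$,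 $\tau>0$, with $\max\{\frac{5\theta}{4p^*},\frac{\theta+8\theta\beta_1/(\gamma_1+1+\omega)}{2p^*},1-\nu\}<\gamma<1-\frac\theta2-\beta_2-\frac\theta2\beta_1$. *)

theory Defs
  imports "HOL-Probability.Probability" "HOL-Library.Landau_Symbols"
begin

definition deriv_chain :: "nat \<Rightarrow> (real \<Rightarrow> real) \<Rightarrow> (nat \<Rightarrow> real \<Rightarrow> real) \<Rightarrow> bool" where
  "deriv_chain q f D \<longleftrightarrow> (\<forall>x\<in>{0..1}. D 0 x = f x) \<and>
     (\<forall>k<q. \<forall>x\<in>{0..1}. (D k has_real_derivative D (Suc k) x) (at x within {0..1}))"

definition hoelder_quot_set :: "real \<Rightarrow> (real \<Rightarrow> real) \<Rightarrow> real set" where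
  "hoelder_quot_set \<mu> g = {\<bar>g x - g y\<bar> / \<bar>x - y\<bar> powr \<mu> | x y. x \<in> {0..1} \<and> y \<in> {0..1} \<and> x \<noteq> y}"

definition in_hoelder :: "nat \<Rightarrow> real \<Rightarrow> (real \<Rightarrow> real) \<Rightarrow> bool" where
  "in_hoelder q \<mu> f \<longleftrightarrow> (\<exists>D. deriv_chain q f D \<and> bdd_above (hoelder_quot_set \<mu> (D q)))"

text \<open>The Hoelder seminorm \<open>\<parallel>f\<parallel>_{q,\<mu>}\<close> (the q-th derivative on [0,1] is unique).\<close>
definition hoelder_seminorm :: "nat \<Rightarrow> real \<Rightarrow> (real \<Rightarrow> real) \<Rightarrow> real" where
  "hoelder_seminorm q \<mu> f = (SOME s. \<exists>D. deriv_chain q f D \<and> s = Sup (hoelder_quot_set \<mu> (D q)))"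

definition sup_norm01 :: "(real \<Rightarrow> real) \<Rightarrow> real" where
  "sup_norm01 f = (SUP x\<in>{0..1}. \<bar>f x\<bar>)"

text \<open>Extended knot sequence for order p with J interior knots \<open>\<ell>/(J+1)\<close>:
  knot index m = 0 .. J+2p-1; the first p knots are 0, the last p knots are 1,
  and knot number p-1+\<ell> is \<open>\<ell>/(J+1)\<close> for \<open>\<ell> = 1..J\<close>.\<close>
definition knot :: "nat \<Rightarrow> nat \<Rightarrow> nat \<Rightarrow> real" where
  "knot J p m = min 1 (max 0 ((real m - real p + 1) / (real J + 1)))"

text \<open>Cox--de Boor recursion; \<open>bsp J r m\<close> is the order-r B-spline starting at knot m.
  Division by zero yields 0 in HOL, which is the usual 0/0 = 0 convention.\<close>
fun bsp :: "nat \<Rightarrow> nat \<Rightarrow> nat \<Rightarrow> nat \<Rightarrow> real \<Rightarrow> real" where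
  "bsp J p 0 m x = 0"
| "bsp J p (Suc 0) m x =
     (if (knot J p m \<le> x \<and> x < knot J p (Suc m)) \<or>
         (x = 1 \<and> knot J p m < 1 \<and> knot J p (Suc m) = 1) then 1 else 0)"
| "bsp J p (Suc (Suc r)) m x =
     (x - knot J p m) / (knot J p (m + Suc r) - knot J p m) * bsp J p (Suc r) m x
   + (knot J p (m + Suc (Suc r)) - x) / (knot J p (m + Suc (Suc r)) - knot J p (Suc m))
       * bsp J p (Suc r) (Suc m) x"

text \<open>\<open>B_{\<ell>,p}\<close>, \<open>\<ell> = 1..J+p\<close>, with interior knots \<open>t_\<ell> = \<ell>/(J+1)\<close>.\<close>
definition Bspline :: "nat \<Rightarrow> nat \<Rightarrow> nat \<Rightarrow> real \<Rightarrow> real" where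
  "Bspline J p l x = bsp J p p (l - 1) x"

end

theory Submission
  imports Defs "HOL-Real_Asymp.Real_Asymp"
begin

lemma knot_mono: "m \<le> m' \<Longrightarrow> knot J p m \<le> knot J p m'"
  unfolding knot_def by (intro min.mono max.mono order_refl divide_right_mono) auto

lemma knot_bounds: "0 \<le> knot J p m" "knot J p m \<le> 1"
  unfolding knot_def by auto

lemma knot_diff: "knot J p (m + r) - knot J p m \<le> real r / (real J + 1)"
proof -
  have "(real (m+r) - real p + 1) / (real J + 1) = (real m - real p + 1) / (real J + 1) + real r / (real J + 1)"
    by (simp add: add_divide_distrib[symmetric] algebra_simps)
  then show ?thesis unfolding knot_def
    by (smt (verit, del_insts) divide_nonneg_nonneg of_nat_0_le_iff)
qed

lemma bsp_support: "bsp J p r m x \<noteq> 0 \<Longrightarrow> knot J p m \<le> x \<and> x \<le> knot J p (m + r)"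
proof (induction J p r m x rule: bsp.induct)
  case (1 J p m x) then show ?case by simp
next
  case (2 J p m x) then show ?case by (auto split: if_splits)
next
  case (3 J p r m x)
  have a: "knot J p m \<le> knot J p (Suc m)" "knot J p (Suc m + Suc r) = knot J p (m + Suc (Suc r))"
     "knot J p (m + Suc r) \<le> knot J p (m + Suc (Suc r))"
    by (auto intro: knot_mono)
  from 3 have "bsp J p (Suc r) m x \<noteq> 0 \<or> bsp J p (Suc r) (Suc m) x \<noteq> 0" by auto
  then show ?case using 3 a by fastforce
qed

lemma weight_clamp1:
  assumes "bsp J p (Suc r) m x \<noteq> 0"
  shows "(x - knot J p m) / (knot J p (m + Suc r) - knot J p m) =
         max 0 (min 1 ((x - knot J p m) / (knot J p (m + Suc r) - knot J p m)))"
proof -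
  from bsp_support[OF assms] have h: "knot J p m \<le> x" "x \<le> knot J p (m + Suc r)" by auto
  show ?thesis
  proof (cases "knot J p (m + Suc r) - knot J p m = 0")
    case True then show ?thesis by simp
  next
    case False
    then have "knot J p (m + Suc r) - knot J p m > 0" using h by linarith
    then show ?thesis using h by (auto simp: divide_le_eq_1 )
  qed
qed

lemma weight_clamp2:
  assumes "bsp J p (Suc r) (Suc m) x \<noteq> 0"
  shows "(knot J p (m + Suc (Suc r)) - x) / (knot J p (m + Suc (Suc r)) - knot J p (Suc m)) =
         max 0 (min 1 ((knot J p (m + Suc (Suc r)) - x) / (knot J p (m + Suc (Suc r)) - knot J p (Suc m))))"
proof -
  from bsp_support[OF assms] have h: "knot J p (Suc m) \<le> x" "x \<le> knot J p (m + Suc (Suc r))" by auto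
  show ?thesis
  proof (cases "knot J p (m + Suc (Suc r)) - knot J p (Suc m) = 0")
    case True then show ?thesis by simp
  next
    case False
    then have "knot J p (m + Suc (Suc r)) - knot J p (Suc m) > 0" using h by linarith
    then show ?thesis using h by (auto simp: divide_le_eq_1 )
  qed
qed

lemma bsp_rec_clamp: "bsp J p (Suc (Suc r)) m x =
     max 0 (min 1 ((x - knot J p m) / (knot J p (m + Suc r) - knot J p m))) * bsp J p (Suc r) m x
   + max 0 (min 1 ((knot J p (m + Suc (Suc r)) - x) / (knot J p (m + Suc (Suc r)) - knot J p (Suc m))))
       * bsp J p (Suc r) (Suc m) x"
proof -
  have e1: "(x - knot J p m) / (knot J p (m + Suc r) - knot J p m) * bsp J p (Suc r) m x =
     max 0 (min 1 ((x - knot J p m) / (knot J p (m + Suc r) - knot J p m))) * bsp J p (Suc r) m x"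
    using weight_clamp1[of J p r m x] by (cases "bsp J p (Suc r) m x = 0") auto
  have e2: "(knot J p (m + Suc (Suc r)) - x) / (knot J p (m + Suc (Suc r)) - knot J p (Suc m)) * bsp J p (Suc r) (Suc m) x =
     max 0 (min 1 ((knot J p (m + Suc (Suc r)) - x) / (knot J p (m + Suc (Suc r)) - knot J p (Suc m))))
       * bsp J p (Suc r) (Suc m) x"
    using weight_clamp2[of J p r m x] by (cases "bsp J p (Suc r) (Suc m) x = 0") auto
  show ?thesis using e1 e2 by simp
qed

lemma bsp_bound: "\<bar>bsp J p r m x\<bar> \<le> 2 ^ r"
proof (induction J p r m x rule: bsp.induct)
  case (3 J p r m x)
  define a where "a = max 0 (min 1 ((x - knot J p m) / (knot J p (m + Suc r) - knot J p m)))"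
  define b where "b = max 0 (min 1 ((knot J p (m + Suc (Suc r)) - x) / (knot J p (m + Suc (Suc r)) - knot J p (Suc m))))"
  have ab: "0 \<le> a" "a \<le> 1" "0 \<le> b" "b \<le> 1" unfolding a_def b_def by auto
  have "\<bar>a * bsp J p (Suc r) m x\<bar> \<le> 1 * 2 ^ Suc r"
    unfolding abs_mult using ab 3(1) by (intro mult_mono) auto
  moreover have "\<bar>b * bsp J p (Suc r) (Suc m) x\<bar> \<le> 1 * 2 ^ Suc r"
    unfolding abs_mult using ab 3(2) by (intro mult_mono) auto
  ultimately show ?case unfolding bsp_rec_clamp[of J p r m x] a_def[symmetric] b_def[symmetric]
    by simp
qed auto


definition gv :: "nat \<Rightarrow> (real \<Rightarrow> real) \<Rightarrow> real" where
  "gv N f = (\<Sum>j\<in>{1..<N}. \<bar>f (real (Suc j) / real N) - f (real j / real N)\<bar>)"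

lemma gv_nonneg: "0 \<le> gv N f"
  unfolding gv_def by (intro sum_nonneg) auto

lemma gv_add: "gv N (\<lambda>x. f x + g x) \<le> gv N f + gv N g"
  unfolding gv_def sum.distrib[symmetric] by (intro sum_mono) auto

lemma gv_mult:
  assumes "\<And>x. \<bar>f x\<bar> \<le> A" "\<And>x. \<bar>g x\<bar> \<le> B"
  shows "gv N (\<lambda>x. f x * g x) \<le> A * gv N g + B * gv N f"
  unfolding gv_def sum_distrib_left sum.distrib[symmetric]
proof (intro sum_mono)
  fix j
  let ?a = "real (Suc j) / real N" and ?b = "real j / real N"
  have "f ?a * g ?a - f ?b * g ?b = f ?a * (g ?a - g ?b) + g ?b * (f ?a - f ?b)"
    by (simp add: algebra_simps)
  then have "\<bar>f ?a * g ?a - f ?b * g ?b\<bar> \<le> \<bar>f ?a\<bar> * \<bar>g ?a - g ?b\<bar> + \<bar>g ?b\<bar> * \<bar>f ?a - f ?b\<bar>"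
    by (metis abs_mult abs_triangle_ineq)
  also have "\<dots> \<le> A * \<bar>g ?a - g ?b\<bar> + B * \<bar>f ?a - f ?b\<bar>"
    using assms by (intro add_mono mult_right_mono) auto
  finally show "\<bar>f ?a * g ?a - f ?b * g ?b\<bar> \<le> A * \<bar>g ?a - g ?b\<bar> + B * \<bar>f ?a - f ?b\<bar>" .
qed

lemma gv_mono:
  assumes "\<And>x y. x \<le> y \<Longrightarrow> f x \<le> f y" "\<And>x. a \<le> f x" "\<And>x. f x \<le> b"
  shows "gv N f \<le> b - a"
proof (cases "N \<ge> 1")
  case True
  have "gv N f = (\<Sum>j\<in>{1..<N}. (\<lambda>j. f (real j / real N)) (Suc j) - (\<lambda>j. f (real j / real N)) j)"
    unfolding gv_def
    by (intro sum.cong refl) (use assms(1) in \<open>auto simp: divide_right_mono\<close>)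
  also have "\<dots> = f (real N / real N) - f (real 1 / real N)"
    by (rule sum_Suc_diff') (use True in auto)
  also have "\<dots> \<le> b - a" using assms by (intro diff_mono) auto
  finally show ?thesis .
next
  case False
  then show ?thesis using assms(2)[of 0] assms(3)[of 0] by (simp add: gv_def)
qed

lemma gv_antimono:
  assumes "\<And>x y. x \<le> y \<Longrightarrow> f y \<le> f x" "\<And>x. a \<le> f x" "\<And>x. f x \<le> b"
  shows "gv N f \<le> b - a"
proof -
  have "gv N (\<lambda>x. - f x) \<le> (-a) - (-b)"
    by (rule gv_mono) (use assms in auto)
  then show ?thesis by (simp add: gv_def abs_minus_commute)
qed

lemma gv_cong: "(\<And>x. f x = g x) \<Longrightarrow> gv N f = gv N g"
  by (simp add: gv_def)

lemma gv_ind_mono: "gv N (\<lambda>x. if a \<le> x then 1 else 0) \<le> 1"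
  using gv_mono[of "\<lambda>x. if a \<le> x then 1 else 0" 0 1 N] by auto

lemma gv_ind_lt: "gv N (\<lambda>x. if x < b then 1 else 0) \<le> 1"
  using gv_antimono[of "\<lambda>x. if x < b then 1 else 0" 0 1 N] by auto

lemma gv_ind_le: "gv N (\<lambda>x. if x \<le> b then 1 else 0) \<le> 1"
  using gv_antimono[of "\<lambda>x. if x \<le> b then 1 else 0" 0 1 N] by auto

lemma gv_prod_ind:
  assumes "gv N f \<le> 1" "gv N g \<le> 1" "\<And>x. \<bar>f x\<bar> \<le> 1" "\<And>x. \<bar>g x\<bar> \<le> 1"
  shows "gv N (\<lambda>x. f x * g x) \<le> 2"
  using gv_mult[of f 1 g 1 N] assms by simp

lemma gv_bsp1: "gv N (bsp J p (Suc 0) m) \<le> 2"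
proof (cases "knot J p m < 1 \<and> knot J p (Suc m) = 1")
  case True
  have "gv N (bsp J p (Suc 0) m) = gv N (\<lambda>x. (if knot J p m \<le> x then 1 else 0) * (if x \<le> 1 then 1 else 0))"
    by (rule gv_cong) (use True in auto)
  also have "\<dots> \<le> 2" by (rule gv_prod_ind) (auto intro: gv_ind_mono gv_ind_le)
  finally show ?thesis .
next
  case False
  have "gv N (bsp J p (Suc 0) m) = gv N (\<lambda>x. (if knot J p m \<le> x then 1 else 0) * (if x < knot J p (Suc m) then 1 else 0))"
    by (rule gv_cong) (use False in auto)
  also have "\<dots> \<le> 2" by (rule gv_prod_ind) (auto intro: gv_ind_mono gv_ind_lt)
  finally show ?thesis .
qed

lemma clamp_mono: "0 \<le> (d::real) \<Longrightarrow> x \<le> y \<Longrightarrow> max 0 (min 1 ((x-c)/d)) \<le> max 0 (min 1 ((y-c)/d))"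
  by (intro max.mono min.mono order_refl divide_right_mono) auto

lemma clamp_anti: "0 \<le> (d::real) \<Longrightarrow> x \<le> y \<Longrightarrow> max 0 (min 1 ((c-y)/d)) \<le> max 0 (min 1 ((c-x)/d))"
  by (intro max.mono min.mono order_refl divide_right_mono) auto

lemma gv_bsp: "gv N (bsp J p r m) \<le> 4 ^ r"
proof (induction r arbitrary: m rule: less_induct)
  case (less rr)
  consider "rr = 0" | "rr = Suc 0" | r where "rr = Suc (Suc r)"
    by (metis not0_implies_Suc)
  then show ?case
  proof cases
    case 1 then show ?thesis by (simp add: gv_def)
  next
    case 2 then show ?thesis using gv_bsp1[of N J p m] by (simp del: bsp.simps)
  next
    case 3
    have c3: "gv N (bsp J p (Suc r) m) \<le> 4 ^ Suc r" "gv N (bsp J p (Suc r) (Suc m)) \<le> 4 ^ Suc r"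
      using less.IH[of "Suc r" m] less.IH[of "Suc r" "Suc m"] 3 by auto
  define a where "a = (\<lambda>x. max 0 (min 1 ((x - knot J p m) / (knot J p (m + Suc r) - knot J p m))))"
  define b where "b = (\<lambda>x. max 0 (min 1 ((knot J p (m + Suc (Suc r)) - x) / (knot J p (m + Suc (Suc r)) - knot J p (Suc m)))))"
  have ga: "gv N a \<le> 1"
  proof -
    have "knot J p m \<le> knot J p (m + Suc r)" by (rule knot_mono) simp
    then have "gv N a \<le> 1 - 0"
      unfolding a_def by (intro gv_mono clamp_mono) auto
    then show ?thesis by simp
  qed
  have gb: "gv N b \<le> 1"
  proof -
    have "knot J p (Suc m) \<le> knot J p (m + Suc (Suc r))" by (rule knot_mono) simp
    then have "gv N b \<le> 1 - 0"
      unfolding b_def by (intro gv_antimono clamp_anti) auto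
    then show ?thesis by simp
  qed
  have "gv N (bsp J p (Suc (Suc r)) m) = gv N (\<lambda>x. a x * bsp J p (Suc r) m x + b x * bsp J p (Suc r) (Suc m) x)"
    unfolding a_def b_def by (rule gv_cong) (rule bsp_rec_clamp)
  also have "\<dots> \<le> gv N (\<lambda>x. a x * bsp J p (Suc r) m x) + gv N (\<lambda>x. b x * bsp J p (Suc r) (Suc m) x)"
    by (rule gv_add)
  also have "\<dots> \<le> (1 * gv N (bsp J p (Suc r) m) + 2 ^ Suc r * gv N a)
                 + (1 * gv N (bsp J p (Suc r) (Suc m)) + 2 ^ Suc r * gv N b)"
    by (intro add_mono gv_mult) (auto simp: a_def b_def intro: bsp_bound[of J p "Suc r", simplified])
  also have "\<dots> \<le> (4 ^ Suc r + 2 ^ Suc r) + (4 ^ Suc r + 2 ^ Suc r)"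
    using c3 ga gb by (intro add_mono) (auto intro: mult_left_mono[of _ 1, simplified])
  also have "\<dots> \<le> 4 ^ Suc (Suc r)"
  proof -
    have "(2::real) ^ Suc r \<le> 4 ^ Suc r" by (intro power_mono) auto
    then show ?thesis by simp
  qed
  finally show ?thesis using 3 by (simp del: bsp.simps)
  qed
qed


lemma abel_identity:
  fixes b e :: "nat \<Rightarrow> real"
  shows "(\<Sum>j=1..N. b j * e j) = b N * (\<Sum>i=1..N. e i) - (\<Sum>j\<in>{1..<N}. (b (Suc j) - b j) * (\<Sum>i=1..j. e i))"
proof (induction N)
  case 0 then show ?case by simp
next
  case (Suc N)
  have "{1..<Suc N} = insert N {1..<N} \<or> N = 0" by auto
  then show ?case
  proof
    assume h: "{1..<Suc N} = insert N {1..<N}"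
    show ?thesis using Suc by (simp add: h algebra_simps)
  next
    assume "N = 0" then show ?thesis by simp
  qed
qed

lemma abel_bound:
  fixes b e :: "nat \<Rightarrow> real"
  assumes E: "\<And>t. t \<in> {1..N} \<Longrightarrow> \<bar>\<Sum>j=1..t. e j\<bar> \<le> R" and R: "0 \<le> R"
  shows "\<bar>\<Sum>j=1..N. b j * e j\<bar> \<le> R * ((\<Sum>j\<in>{1..<N}. \<bar>b (Suc j) - b j\<bar>) + \<bar>b N\<bar>)"
proof -
  have t1: "\<bar>b N * (\<Sum>i=1..N. e i)\<bar> \<le> \<bar>b N\<bar> * R"
  proof (cases "N = 0")
    case True then show ?thesis using R by simp
  next
    case False then show ?thesis unfolding abs_mult using E[of N] by (intro mult_left_mono) auto
  qed
  have t2: "\<bar>\<Sum>j\<in>{1..<N}. (b (Suc j) - b j) * (\<Sum>i=1..j. e i)\<bar> \<le> (\<Sum>j\<in>{1..<N}. \<bar>b (Suc j) - b j\<bar> * R)"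
    by (rule order_trans[OF sum_abs], rule sum_mono) (use E in \<open>auto simp: abs_mult intro!: mult_left_mono\<close>)
  have "\<bar>\<Sum>j=1..N. b j * e j\<bar> = \<bar>b N * (\<Sum>i=1..N. e i) - (\<Sum>j\<in>{1..<N}. (b (Suc j) - b j) * (\<Sum>i=1..j. e i))\<bar>"
    by (subst abel_identity) (rule refl)
  also have "\<dots> \<le> \<bar>b N * (\<Sum>i=1..N. e i)\<bar> + \<bar>\<Sum>j\<in>{1..<N}. (b (Suc j) - b j) * (\<Sum>i=1..j. e i)\<bar>"
    by (rule abs_triangle_ineq4)
  also have "\<dots> \<le> \<bar>b N\<bar> * R + (\<Sum>j\<in>{1..<N}. \<bar>b (Suc j) - b j\<bar> * R)"
    using t1 t2 by (rule add_mono)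
  also have "\<dots> = R * ((\<Sum>j\<in>{1..<N}. \<bar>b (Suc j) - b j\<bar>) + \<bar>b N\<bar>)"
    by (simp add: sum_distrib_left[symmetric] sum_distrib_right[symmetric] algebra_simps)
  finally show ?thesis .
qed

lemma count_nat_interval:
  fixes S :: "nat set" and u v :: real
  assumes "\<And>k. k \<in> S \<Longrightarrow> u \<le> real k \<and> real k \<le> u + v" "finite S" "0 \<le> v"
  shows "real (card S) \<le> v + 1"
proof (cases "S = {}")
  case True
  then show ?thesis using assms by simp
next
  case False
  define k0 where "k0 = Min S"
  have k0: "k0 \<in> S" "\<And>k. k \<in> S \<Longrightarrow> k0 \<le> k" using False assms(2) by (auto simp: k0_def)
  have v0: "0 \<le> v" using assms(1)[OF k0(1)] by simp
  have sub: "S \<subseteq> {k0 .. k0 + nat \<lfloor>v\<rfloor>}"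
  proof
    fix k assume k: "k \<in> S"
    have "real k - real k0 \<le> v" using assms(1)[OF k] assms(1)[OF k0(1)] by simp
    then have "real (k - k0) \<le> v" using k0(2)[OF k] by (simp add: of_nat_diff)
    then have "int (k - k0) \<le> \<lfloor>v\<rfloor>" by (simp add: le_floor_iff)
    then have "k - k0 \<le> nat \<lfloor>v\<rfloor>" by linarith
    then show "k \<in> {k0 .. k0 + nat \<lfloor>v\<rfloor>}" using k0(2)[OF k] by simp
  qed
  have "card S \<le> card {k0 .. k0 + nat \<lfloor>v\<rfloor>}" by (rule card_mono[OF _ sub]) simp
  also have "\<dots> = nat \<lfloor>v\<rfloor> + 1" by simp
  finally have "real (card S) \<le> real (nat \<lfloor>v\<rfloor>) + 1" by linarith
  also have "\<dots> \<le> v + 1" using v0 by (simp add: of_nat_nat)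
  finally show ?thesis .
qed

lemma count_grid:
  assumes w: "0 \<le> w"
  shows "real (card {j\<in>{1..<N}. a \<le> real (Suc j) / real N \<and> real (Suc j) / real N \<le> a + w}) \<le> real N * w + 1"
proof (cases "N = 0")
  case True then show ?thesis by simp
next
  case False
  let ?S = "{j\<in>{1..<N}. a \<le> real (Suc j) / real N \<and> real (Suc j) / real N \<le> a + w}"
  have "card ?S = card (Suc ` ?S)" by (rule card_image[symmetric]) simp
  also have "real (card (Suc ` ?S)) \<le> real N * w + 1"
  proof (rule count_nat_interval[where u = "real N * a"])
    fix k assume "k \<in> Suc ` ?S"
    then obtain j where j: "k = Suc j" "a \<le> real (Suc j) / real N" "real (Suc j) / real N \<le> a + w" by auto
    have Np: "real N > 0" using False by simp
    from j(2) have "real N * a \<le> real (Suc j)" using Np by (simp add: field_simps)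
    moreover from j(3) have "real (Suc j) \<le> real N * a + real N * w" using Np by (simp add: field_simps)
    ultimately show "real N * a \<le> real k \<and> real k \<le> real N * a + real N * w" using j(1) by simp
  qed (use w in simp_all)
  finally show ?thesis by simp
qed

lemma bvar_bound:
  fixes \<sigma> :: "real \<Rightarrow> real"
  assumes hol: "\<And>x y. x \<in> {0..1} \<Longrightarrow> y \<in> {0..1} \<Longrightarrow> \<bar>\<sigma> x - \<sigma> y\<bar> \<le> L * \<bar>x - y\<bar> powr \<nu>"
    and sb: "\<And>x. x \<in> {0..1} \<Longrightarrow> \<bar>\<sigma> x\<bar> \<le> S" and L: "0 \<le> L"
  shows "(\<Sum>j\<in>{1..<N}. \<bar>bsp J p r m (real (Suc j) / real N) * \<sigma> (real (Suc j) / real N)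
                        - bsp J p r m (real j / real N) * \<sigma> (real j / real N)\<bar>)
     \<le> S * 4 ^ r + 2 ^ r * L * real N powr (-\<nu>) * (real N * real r / (real J + 1) + 1)"
proof -
  define B where "B = bsp J p r m"
  define T where "T = {j\<in>{1..<N}. B (real (Suc j) / real N) \<noteq> 0}"
  define c where "c = 2 ^ r * L * real N powr (-\<nu>)"
  have S0: "0 \<le> S" using sb[of 0] by simp
  have c0: "0 \<le> c" using L by (simp add: c_def)
  have step: "\<bar>B (real (Suc j) / real N) * \<sigma> (real (Suc j) / real N) - B (real j / real N) * \<sigma> (real j / real N)\<bar>
      \<le> S * \<bar>B (real (Suc j) / real N) - B (real j / real N)\<bar> + (if j \<in> T then c else 0)"
    if j: "j \<in> {1..<N}" for j
  proof -
    let ?a = "real (Suc j) / real N" and ?b = "real j / real N"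
    have ab: "?a \<in> {0..1}" "?b \<in> {0..1}" using j by auto
    have "B ?a * \<sigma> ?a - B ?b * \<sigma> ?b = \<sigma> ?b * (B ?a - B ?b) + B ?a * (\<sigma> ?a - \<sigma> ?b)"
      by (simp add: algebra_simps)
    then have "\<bar>B ?a * \<sigma> ?a - B ?b * \<sigma> ?b\<bar> \<le> \<bar>\<sigma> ?b\<bar> * \<bar>B ?a - B ?b\<bar> + \<bar>B ?a\<bar> * \<bar>\<sigma> ?a - \<sigma> ?b\<bar>"
      by (metis abs_mult abs_triangle_ineq)
    also have "\<bar>\<sigma> ?b\<bar> * \<bar>B ?a - B ?b\<bar> \<le> S * \<bar>B ?a - B ?b\<bar>"
      using sb[OF ab(2)] by (intro mult_right_mono) auto
    also have "\<bar>B ?a\<bar> * \<bar>\<sigma> ?a - \<sigma> ?b\<bar> \<le> (if j \<in> T then c else 0)"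
    proof (cases "j \<in> T")
      case False
      then have "B ?a = 0" using j by (simp add: T_def)
      then show ?thesis using False by simp
    next
      case True
      have Np: "real N > 0" using j by simp
      have d: "\<bar>?a - ?b\<bar> = 1 / real N" using Np by (simp add: field_simps)
      have "\<bar>\<sigma> ?a - \<sigma> ?b\<bar> \<le> L * (1 / real N) powr \<nu>" using hol[OF ab] d by simp
      also have "(1 / real N) powr \<nu> = real N powr (-\<nu>)"
        using Np by (simp add: powr_minus_divide powr_divide)
      finally have h1: "\<bar>\<sigma> ?a - \<sigma> ?b\<bar> \<le> L * real N powr (-\<nu>)" .
      have "\<bar>B ?a\<bar> * \<bar>\<sigma> ?a - \<sigma> ?b\<bar> \<le> 2 ^ r * (L * real N powr (-\<nu>))"
        unfolding B_def by (intro mult_mono bsp_bound h1) auto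
      then show ?thesis using True by (simp add: c_def mult.assoc)
    qed
    finally show ?thesis by simp
  qed
  have "(\<Sum>j\<in>{1..<N}. \<bar>B (real (Suc j) / real N) * \<sigma> (real (Suc j) / real N) - B (real j / real N) * \<sigma> (real j / real N)\<bar>)
      \<le> (\<Sum>j\<in>{1..<N}. S * \<bar>B (real (Suc j) / real N) - B (real j / real N)\<bar> + (if j \<in> T then c else 0))"
    by (rule sum_mono) (rule step)
  also have "\<dots> = S * gv N B + c * real (card T)"
  proof -
    have "(\<Sum>j\<in>{1..<N}. (if j \<in> T then c else 0)) = (\<Sum>j\<in>T. c)"
    proof -
      have "T = {1..<N} \<inter> T" by (auto simp: T_def)
      then show ?thesis using sum.inter_restrict[of "{1..<N}" "\<lambda>_. c" T] by simp
    qed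
    then show ?thesis by (simp add: sum.distrib gv_def sum_distrib_left)
  qed
  also have "\<dots> \<le> S * 4 ^ r + c * (real N * real r / (real J + 1) + 1)"
  proof (intro add_mono mult_left_mono S0 c0)
    show "gv N B \<le> 4 ^ r" unfolding B_def by (rule gv_bsp)
    have "T \<subseteq> {j\<in>{1..<N}. knot J p m \<le> real (Suc j) / real N \<and> real (Suc j) / real N \<le> knot J p m + real r / (real J + 1)}"
      using bsp_support[of J p r m] knot_diff[of J p m r] by (fastforce simp: T_def B_def)
    then have "card T \<le> card {j\<in>{1..<N}. knot J p m \<le> real (Suc j) / real N \<and> real (Suc j) / real N \<le> knot J p m + real r / (real J + 1)}"
      by (intro card_mono) auto
    also have "real \<dots> \<le> real N * (real r / (real J + 1)) + 1"
      by (rule count_grid) simp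
    finally show "real (card T) \<le> real N * real r / (real J + 1) + 1" by simp
  qed
  finally show ?thesis unfolding B_def c_def by simp
qed


lemma ln_powr_le_powr:
  assumes "0 < (t::real)" "0 < \<delta>"
  shows "eventually (\<lambda>N::nat. ln (real N) powr t \<le> real N powr \<delta>) sequentially"
  using assms by real_asymp

lemma asym_J:
  fixes Js :: "nat \<Rightarrow> nat" and d :: "nat \<Rightarrow> real"
  assumes J: "(\<lambda>N. real (Js N)) \<in> \<Theta>(\<lambda>N. real N powr \<gamma> * d N)" and dpos: "\<And>N. d N > 0"
    and D: "(\<lambda>N. d N + 1 / d N) \<in> O(\<lambda>N. ln (real N) powr \<tau>)" and t: "\<tau> > 0" and g: "1 - \<nu> < \<gamma>"
  shows "\<exists>C. eventually (\<lambda>N. real N powr (1-\<nu>) \<le> C * (real (Js N) + 1)) sequentially"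
proof -
  from bigthetaD2[OF J] obtain c where c: "c > 0"
    "eventually (\<lambda>N. norm (real (Js N)) \<ge> c * norm (real N powr \<gamma> * d N)) sequentially"
    by (elim landau_omega.bigE) auto
  from D obtain C where C: "C > 0"
    "eventually (\<lambda>N. norm (d N + 1 / d N) \<le> C * norm (ln (real N) powr \<tau>)) sequentially"
    by (elim landau_o.bigE) auto
  have e3: "eventually (\<lambda>N::nat. ln (real N) powr \<tau> \<le> real N powr (\<gamma> - (1 - \<nu>))) sequentially"
    by (rule ln_powr_le_powr) (use t g in auto)
  have e4: "eventually (\<lambda>N::nat. N \<ge> 3) sequentially" by (rule eventually_ge_at_top)
  have "eventually (\<lambda>N. real N powr (1-\<nu>) \<le> (C / c) * (real (Js N) + 1)) sequentially"
    using c(2) C(2) e3 e4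
  proof eventually_elim
    case (elim N)
    have Np: "real N > 0" using elim(4) by simp
    have lnp: "ln (real N) > 0" using elim(4) by simp
    have dN: "d N > 0" by (rule dpos)
    have "1 / d N \<le> d N + 1 / d N" using dN by simp
    also have "\<dots> \<le> C * ln (real N) powr \<tau>" using elim(2) dN lnp by simp
    also have "\<dots> \<le> C * real N powr (\<gamma> - (1 - \<nu>))" using elim(3) C(1) by simp
    finally have h1: "1 \<le> C * real N powr (\<gamma> - (1 - \<nu>)) * d N" using dN by (simp add: field_simps)
    have "real N powr (1-\<nu>) = real N powr (1-\<nu>) * 1" by simp
    also have "\<dots> \<le> real N powr (1-\<nu>) * (C * real N powr (\<gamma> - (1 - \<nu>)) * d N)"
      using h1 by (intro mult_left_mono) auto
    also have "\<dots> = C * (real N powr \<gamma> * d N)"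
      by (simp add: powr_add[symmetric] mult.commute mult.left_commute)
    also have "\<dots> \<le> C * (real (Js N) / c)"
      using elim(1) c(1) C(1) dN by (intro mult_left_mono) (auto simp: field_simps)
    also have "\<dots> \<le> (C / c) * (real (Js N) + 1)"
      using c(1) C(1) by (simp add: field_simps)
    finally show ?case .
  qed
  then show ?thesis by blast
qed


lemma event_meas:
  fixes X :: "nat \<Rightarrow> nat \<Rightarrow> 'a \<Rightarrow> real"
  assumes X: "\<And>i j. i \<in> I \<Longrightarrow> j \<ge> 1 \<Longrightarrow> X i j \<in> borel_measurable M" and fin: "finite I"
  shows "{\<omega>\<in>space M. \<exists>i\<in>I. \<exists>t\<in>{1..T}. \<bar>\<Sum>j=1..t. X i j \<omega>\<bar> > c} \<in> sets M"
proof -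
  have eq: "{\<omega>\<in>space M. \<exists>i\<in>I. \<exists>t\<in>{1..T}. \<bar>\<Sum>j=1..t. X i j \<omega>\<bar> > c} =
      (\<Union>i\<in>I. \<Union>t\<in>{1..T}. {\<omega>\<in>space M. c < \<bar>\<Sum>j=1..t. X i j \<omega>\<bar>})" by auto
  have m: "(\<lambda>\<omega>. \<bar>\<Sum>j=1..t. X i j \<omega>\<bar>) \<in> borel_measurable M" if "i \<in> I" for i t
    using X[OF that] by (intro borel_measurable_abs borel_measurable_sum) auto
  show ?thesis unfolding eq
    by (intro sets.finite_UN fin finite_atLeastAtMost ballI) (use m in measurable)
qed

lemma bc_eventually:
  assumes P: "prob_space M" and E: "\<And>n. n \<ge> 1 \<Longrightarrow> E n \<in> sets M"
    and m: "\<And>n. n \<ge> 1 \<Longrightarrow> measure M (E n) < c * real n powr (-g)" and g: "g > 1"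
  shows "AE \<omega> in M. eventually (\<lambda>n. \<omega> \<notin> E n) sequentially"
proof -
  interpret prob_space M by (rule P)
  define A where "A n = (if n \<ge> 1 then E n else {})" for n
  have A: "A n \<in> sets M" for n using E by (simp add: A_def)
  have fin: "\<And>n. emeasure M (A n) < \<infinity>" by (simp add: less_top[symmetric])
  have sg: "summable (\<lambda>n. c * real n powr (-g))"
    by (intro summable_mult) (simp add: summable_real_powr_iff g)
  have "summable (\<lambda>n. measure M (A n))"
  proof (rule summable_comparison_test[OF _ sg])
    show "\<exists>N. \<forall>n\<ge>N. norm (measure M (A n)) \<le> c * real n powr (-g)"
      using m by (intro exI[of _ 1]) (auto simp: A_def less_imp_le)
  qed
  from borel_cantelli_AE1[OF A fin this] have
    "AE x in M. eventually (\<lambda>n. x \<in> space M - A n) sequentially" .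
  then show ?thesis
  proof (rule AE_mp, intro AE_I2 impI)
    fix x assume "eventually (\<lambda>n. x \<in> space M - A n) sequentially"
    moreover have "eventually (\<lambda>n. n \<ge> (1::nat)) sequentially" by (rule eventually_ge_at_top)
    ultimately show "eventually (\<lambda>n. x \<notin> E n) sequentially"
      by eventually_elim (auto simp: A_def)
  qed
qed


lemma term_bound:
  fixes a :: "nat \<Rightarrow> real"
  assumes a: "\<And>t. t \<in> {1..n} \<Longrightarrow> \<bar>\<Sum>i=1..t. a i\<bar> \<le> A" and i: "i \<in> {1..n}"
  shows "\<bar>a i\<bar> \<le> 2 * A"
proof (cases "i = 1")
  case True
  then show ?thesis using a[OF i] by simp
next
  case False
  then obtain i' where i': "i = Suc i'" "i' \<ge> 1" using i by (cases i) auto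
  have "(\<Sum>k=1..i. a k) = (\<Sum>k=1..i'. a k) + a i" using i' by simp
  then have "a i = (\<Sum>k=1..i. a k) - (\<Sum>k=1..i'. a k)" by simp
  moreover have "\<bar>\<Sum>k=1..i'. a k\<bar> \<le> A" using a[of i'] i i' by simp
  moreover have "\<bar>\<Sum>k=1..i. a k\<bar> \<le> A" using a[OF i] .
  ultimately show ?thesis by linarith
qed

lemma final_bound:
  fixes a :: "nat \<Rightarrow> real" and e :: "nat \<Rightarrow> nat \<Rightarrow> real" and b :: "nat \<Rightarrow> real"
  assumes a: "\<And>t. t \<in> {1..n} \<Longrightarrow> \<bar>\<Sum>i=1..t. a i\<bar> \<le> A"
    and e: "\<And>i t. i \<in> {1..n} \<Longrightarrow> t \<in> {1..N} \<Longrightarrow> \<bar>\<Sum>j=1..t. e i j\<bar> \<le> R" and R: "R \<ge> 0"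
    and b: "(\<Sum>j\<in>{1..<N}. \<bar>b (Suc j) - b j\<bar>) + \<bar>b N\<bar> \<le> Q"
  shows "\<bar>\<Sum>i=1..n. a i * (\<Sum>j=1..N. b j * e i j)\<bar> \<le> real n * ((2 * A) * (R * Q))"
proof -
  have "\<bar>\<Sum>i=1..n. a i * (\<Sum>j=1..N. b j * e i j)\<bar> \<le> (\<Sum>i=1..n. \<bar>a i * (\<Sum>j=1..N. b j * e i j)\<bar>)"
    by (rule sum_abs)
  also have "\<dots> \<le> (\<Sum>i=1..n. (2 * A) * (R * Q))"
  proof (rule sum_mono)
    fix i assume i: "i \<in> {1..n}"
    have "\<bar>\<Sum>j=1..N. b j * e i j\<bar> \<le> R * ((\<Sum>j\<in>{1..<N}. \<bar>b (Suc j) - b j\<bar>) + \<bar>b N\<bar>)"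
      by (rule abel_bound) (use e[OF i] R in auto)
    also have "\<dots> \<le> R * Q" using b R by (intro mult_left_mono) auto
    finally have h: "\<bar>\<Sum>j=1..N. b j * e i j\<bar> \<le> R * Q" .
    show "\<bar>a i * (\<Sum>j=1..N. b j * e i j)\<bar> \<le> (2 * A) * (R * Q)"
      unfolding abs_mult using term_bound[OF a i] h
      by (intro mult_mono) (auto intro: order_trans[OF abs_ge_zero])
  qed
  also have "\<dots> = real n * ((2 * A) * (R * Q))" by simp
  finally show ?thesis .
qed

lemma Q_bound:
  fixes \<sigma> :: "real \<Rightarrow> real"
  assumes hol: "\<And>x y. x \<in> {0..1} \<Longrightarrow> y \<in> {0..1} \<Longrightarrow> \<bar>\<sigma> x - \<sigma> y\<bar> \<le> L * \<bar>x - y\<bar> powr \<nu>"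
    and sb: "\<And>x. x \<in> {0..1} \<Longrightarrow> \<bar>\<sigma> x\<bar> \<le> S" and L: "0 \<le> L" and nu: "0 < \<nu>"
    and N: "N \<ge> 1" and asy: "real N powr (1 - \<nu>) \<le> C1 * (real J + 1)"
  shows "(\<Sum>j\<in>{1..<N}. \<bar>Bspline J p l (real (Suc j) / real N) * \<sigma> (real (Suc j) / real N)
                        - Bspline J p l (real j / real N) * \<sigma> (real j / real N)\<bar>)
          + \<bar>Bspline J p l (real N / real N) * \<sigma> (real N / real N)\<bar>
     \<le> S * 4 ^ p + 2 ^ p * L * (real p * C1 + 1) + 2 ^ p * S"
proof -
  have S0: "0 \<le> S" using sb[of 0] by simp
  have Np: "real N > 0" using N by simp
  have t1: "(\<Sum>j\<in>{1..<N}. \<bar>Bspline J p l (real (Suc j) / real N) * \<sigma> (real (Suc j) / real N)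
                        - Bspline J p l (real j / real N) * \<sigma> (real j / real N)\<bar>)
     \<le> S * 4 ^ p + 2 ^ p * L * real N powr (-\<nu>) * (real N * real p / (real J + 1) + 1)"
    unfolding Bspline_def by (rule bvar_bound[OF hol sb L])
  have "real N powr (-\<nu>) * (real N * real p / (real J + 1) + 1)
      = real p * (real N powr (1 - \<nu>) / (real J + 1)) + real N powr (-\<nu>)"
  proof -
    have "real N powr (-\<nu>) * real N = real N powr (1 - \<nu>)"
    proof -
      have "real N powr (1 - \<nu>) = real N powr (-\<nu> + 1)" by simp
      also have "\<dots> = real N powr (-\<nu>) * real N powr 1" by (rule powr_add)
      also have "\<dots> = real N powr (-\<nu>) * real N" using Np by simp
      finally show ?thesis by simp
    qed
    then show ?thesis by (simp add: field_simps)
  qed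
  also have "\<dots> \<le> real p * C1 + 1"
  proof (intro add_mono mult_left_mono)
    show "real N powr (1 - \<nu>) / (real J + 1) \<le> C1" using asy by (simp add: divide_le_eq)
    have "1 \<le> real N powr \<nu>" using N nu by (intro ge_one_powr_ge_zero) auto
    then show "real N powr (-\<nu>) \<le> 1" by (simp add: powr_minus inverse_le_1_iff)
  qed simp
  finally have t2: "real N powr (-\<nu>) * (real N * real p / (real J + 1) + 1) \<le> real p * C1 + 1" .
  have t3: "2 ^ p * L * real N powr (-\<nu>) * (real N * real p / (real J + 1) + 1) \<le> 2 ^ p * L * (real p * C1 + 1)"
    using t2 L by (simp add: mult.assoc mult_left_mono)
  have t4: "\<bar>Bspline J p l (real N / real N) * \<sigma> (real N / real N)\<bar> \<le> 2 ^ p * S"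
    unfolding abs_mult Bspline_def using Np sb[of 1] by (intro mult_mono bsp_bound) auto
  show ?thesis using t1 t3 t4 by linarith
qed


theorem lemmaA9:
  fixes M :: "'a measure"
    and \<xi> \<epsilon> U\<^sub>\<xi> U\<^sub>\<epsilon> :: "nat \<Rightarrow> nat \<Rightarrow> 'a \<Rightarrow> real"
    and \<sigma> C :: "real \<Rightarrow> real"
    and lam :: "nat \<Rightarrow> real" and \<psi> \<phi> :: "nat \<Rightarrow> real \<Rightarrow> real"
    and nN kn Js :: "nat \<Rightarrow> nat" and d :: "nat \<Rightarrow> real"
    and p q :: nat
    and \<mu> \<nu> h\<^sub>0 M\<^sub>\<sigma> M\<^sub>0 \<theta> \<omega> c\<^sub>1 c\<^sub>2 \<gamma>\<^sub>1 \<gamma>\<^sub>2 \<beta>\<^sub>1 \<beta>\<^sub>2 \<gamma> \<tau> :: real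
  assumes P: "prob_space M"
  \<comment> \<open>scores \<xi>_{ik}: measurable, for each i uncorrelated with mean 0 and variance 1,
      i.i.d. across i (as sequences in k)\<close>
    and xi_meas: "\<And>i k. \<xi> i k \<in> borel_measurable M"
    and xi_int: "\<And>i k k'. integrable M (\<lambda>\<omega>. \<xi> i k \<omega> * \<xi> i k' \<omega>)"
    and xi_mean: "\<And>i k. i \<ge> 1 \<Longrightarrow> k \<ge> 1 \<Longrightarrow> prob_space.expectation M (\<xi> i k) = 0"
    and xi_cov: "\<And>i k k'. i \<ge> 1 \<Longrightarrow> k \<ge> 1 \<Longrightarrow> k' \<ge> 1 \<Longrightarrow>
        prob_space.expectation M (\<lambda>\<omega>. \<xi> i k \<omega> * \<xi> i k' \<omega>) = (if k = k' then 1 else 0)"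
    and xi_indep: "prob_space.indep_vars M (\<lambda>_. PiM {1..} (\<lambda>_. borel))
        (\<lambda>i \<omega>. \<lambda>k\<in>{1..}. \<xi> i k \<omega>) {1..}"
    and xi_ident: "\<And>i. i \<ge> 1 \<Longrightarrow> distr M (PiM {1..} (\<lambda>_. borel)) (\<lambda>\<omega>. \<lambda>k\<in>{1..}. \<xi> i k \<omega>)
        = distr M (PiM {1..} (\<lambda>_. borel)) (\<lambda>\<omega>. \<lambda>k\<in>{1..}. \<xi> 1 k \<omega>)"
  \<comment> \<open>errors \<epsilon>_{ij}: i.i.d., mean 0, variance 1, independent of the Z_i (i.e. of the scores)\<close>
    and eps_meas: "\<And>i j. \<epsilon> i j \<in> borel_measurable M"
    and eps_int: "\<And>i j. integrable M (\<lambda>\<omega>. (\<epsilon> i j \<omega>)\<^sup>2)"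
    and eps_indep: "prob_space.indep_vars M (\<lambda>_. borel) (\<lambda>(i, j). \<epsilon> i j) ({1..} \<times> {1..})"
    and eps_ident: "\<And>i j. i \<ge> 1 \<Longrightarrow> j \<ge> 1 \<Longrightarrow> distr M borel (\<epsilon> i j) = distr M borel (\<epsilon> 1 1)"
    and eps_mean: "prob_space.expectation M (\<epsilon> 1 1) = 0"
    and eps_var: "prob_space.variance M (\<epsilon> 1 1) = 1"
    and eps_xi_indep: "prob_space.indep_var M
        (PiM ({1..} \<times> {1..}) (\<lambda>_. borel)) (\<lambda>\<omega>. \<lambda>ij\<in>{1..} \<times> {1..}. \<epsilon> (fst ij) (snd ij) \<omega>)
        (PiM ({1..} \<times> {1..}) (\<lambda>_. borel)) (\<lambda>\<omega>. \<lambda>ik\<in>{1..} \<times> {1..}. \<xi> (fst ik) (snd ik) \<omega>)"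
  \<comment> \<open>covariance structure: G(x,x') = C(|x-x'|), eigenpairs (\<lambda>_k, \<psi>_k), \<phi>_k = sqrt \<lambda>_k \<psi>_k,
      Z_i(x) = \<Sum>_k \<xi>_{ik} \<phi>_k(x)\<close>
    and Z_cov: "\<And>x x'. x \<in> {0..1} \<Longrightarrow> x' \<in> {0..1} \<Longrightarrow>
        prob_space.expectation M (\<lambda>\<omega>.
          ((\<Sum>k. \<xi> 1 (Suc k) \<omega> * \<phi> (Suc k) x) - prob_space.expectation M (\<lambda>\<omega>'. \<Sum>k. \<xi> 1 (Suc k) \<omega>' * \<phi> (Suc k) x))
        * ((\<Sum>k. \<xi> 1 (Suc k) \<omega> * \<phi> (Suc k) x') - prob_space.expectation M (\<lambda>\<omega>'. \<Sum>k. \<xi> 1 (Suc k) \<omega>' * \<phi> (Suc k) x')))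
        = C \<bar>x - x'\<bar>"
    and psi_orth: "\<And>k l. k \<ge> 1 \<Longrightarrow> l \<ge> 1 \<Longrightarrow>
        integral {0..1} (\<lambda>x. \<psi> k x * \<psi> l x) = (if k = l then 1 else 0)"
    and eigen: "\<And>k x. k \<ge> 1 \<Longrightarrow> x \<in> {0..1} \<Longrightarrow>
        integral {0..1} (\<lambda>x'. C \<bar>x - x'\<bar> * \<psi> k x') = lam k * \<psi> k x"
    and lambda_nonneg: "\<And>k. k \<ge> 1 \<Longrightarrow> lam k \<ge> 0"
    and phi_def: "\<And>k x. k \<ge> 1 \<Longrightarrow> \<phi> k x = sqrt (lam k) * \<psi> k x"
    and h0: "0 < h\<^sub>0" "h\<^sub>0 < 1"
  \<comment> \<open>smoothness exponent p* = q + \<mu>\<close>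
    and q_pos: "q > 0" and mu: "0 < \<mu>" "\<mu> \<le> 1"
  \<comment> \<open>(A2)\<close>
    and A2_nu: "0 < \<nu>" "\<nu> \<le> 1"
    and A2_sigma: "in_hoelder 0 \<nu> \<sigma>"
    and A2_sup_sigma: "\<And>x. x \<in> {0..1} \<Longrightarrow> \<sigma> x \<le> M\<^sub>\<sigma>"
    and A2_C: "\<And>t. t \<in> {0..h\<^sub>0} \<Longrightarrow> \<bar>C t\<bar> \<le> M\<^sub>0"
  \<comment> \<open>(A3): n = n(N)\<close>
    and A3_lim: "filterlim nN at_top at_top"
    and A3_theta: "\<theta> > 0"
    and A3_O: "(\<lambda>N. real (nN N)) \<in> O(\<lambda>N. real N powr \<theta>)"
  \<comment> \<open>(A4)\<close>
    and A4_hoelder: "\<And>k. k \<ge> 1 \<Longrightarrow> in_hoelder q \<mu> (\<phi> k)"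
    and A4_sum_hoelder: "summable (\<lambda>k. hoelder_seminorm q \<mu> (\<phi> (Suc k)))"
    and A4_bdd: "\<And>k. k \<ge> 1 \<Longrightarrow> bdd_above ((\<lambda>x. \<bar>\<phi> k x\<bar>) ` {0..1})"
    and A4_sum_sup: "summable (\<lambda>k. sup_norm01 (\<phi> (Suc k)))"
    and A4_kn_mono: "strict_mono kn"
    and A4_tail: "(\<lambda>n. \<Sum>k. sup_norm01 (\<phi> (k + kn n + 1))) \<in> o(\<lambda>n. real n powr (-1/2))"
    and A4_omega: "\<omega> > 0"
    and A4_kn_O: "(\<lambda>n. real (kn n)) \<in> O(\<lambda>n. real n powr \<omega>)"
  \<comment> \<open>(A5)\<close>
    and A5_consts: "c\<^sub>1 > 0" "c\<^sub>2 > 0" "\<gamma>\<^sub>1 > 1" "\<gamma>\<^sub>2 > 1"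
        "0 < \<beta>\<^sub>1" "\<beta>\<^sub>1 < 1/2" "0 < \<beta>\<^sub>2" "\<beta>\<^sub>2 < 1/2"
    and A5_gauss_xi: "\<And>i k. i \<ge> 1 \<Longrightarrow> k \<ge> 1 \<Longrightarrow>
        distributed M lborel (U\<^sub>\<xi> i k) std_normal_density"
    and A5_indep_xi: "prob_space.indep_vars M (\<lambda>_. borel) (\<lambda>(i, k). U\<^sub>\<xi> i k) ({1..} \<times> {1..})"
    and A5_gauss_eps: "\<And>i j. i \<ge> 1 \<Longrightarrow> j \<ge> 1 \<Longrightarrow>
        distributed M lborel (U\<^sub>\<epsilon> i j) std_normal_density"
    and A5_indep_eps: "prob_space.indep_vars M (\<lambda>_. borel) (\<lambda>(i, j). U\<^sub>\<epsilon> i j) ({1..} \<times> {1..})"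
    and A5_rate: "min (2 * (1 - \<beta>\<^sub>2) * (q + \<mu>) / (3 + (1 + \<beta>\<^sub>1) * (q + \<mu>)))
                       (2 * (\<nu> - \<beta>\<^sub>2) / (1 + \<beta>\<^sub>1)) > \<theta>"
    and A5_xi: "\<And>n. n \<ge> 1 \<Longrightarrow> measure M {\<omega> \<in> space M. \<exists>k\<in>{1..kn n}. \<exists>t\<in>{1..n}.
         \<bar>\<Sum>i=1..t. \<xi> i k \<omega> - U\<^sub>\<xi> i k \<omega>\<bar> > real n powr \<beta>\<^sub>1} < c\<^sub>1 * real n powr (- \<gamma>\<^sub>1)"
    and A5_eps: "\<And>N. N \<ge> 1 \<Longrightarrow> measure M {\<omega> \<in> space M. \<exists>i\<in>{1..nN N}. \<exists>t\<in>{1..N}.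
         \<bar>\<Sum>j=1..t. \<epsilon> i j \<omega> - U\<^sub>\<epsilon> i j \<omega>\<bar> > real N powr \<beta>\<^sub>2} < c\<^sub>2 * real N powr (- \<gamma>\<^sub>2)"
  \<comment> \<open>(A6)\<close>
    and A6_p: "real p \<ge> q + \<mu>"
    and A6_d_pos: "\<And>N. d N > 0"
    and A6_Js: "(\<lambda>N. real (Js N)) \<in> \<Theta>(\<lambda>N. real N powr \<gamma> * d N)"
    and A6_tau: "\<tau> > 0"
    and A6_d: "(\<lambda>N. d N + 1 / d N) \<in> O(\<lambda>N. ln (real N) powr \<tau>)"
    and A6_gamma_lo: "max (max (5 * \<theta> / (4 * (q + \<mu>)))
          ((\<theta> + 8 * \<theta> * \<beta>\<^sub>1 / (\<gamma>\<^sub>1 + 1 + \<omega>)) / (2 * (q + \<mu>)))) (1 - \<nu>) < \<gamma>"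
    and A6_gamma_hi: "\<gamma> < 1 - \<theta> / 2 - \<beta>\<^sub>2 - \<theta> / 2 * \<beta>\<^sub>1"
  shows "AE \<omega> in M. \<exists>K. \<forall>\<^sub>F N in sequentially.
     \<forall>k\<in>{1..kn (nN N)}. \<forall>l\<in>{1..Js N + p}.
       \<bar>1 / (real (nN N) * real N) * (\<Sum>i=1..nN N. (\<xi> i k \<omega> - U\<^sub>\<xi> i k \<omega>) *
          (\<Sum>j=1..N. Bspline (Js N) p l (real j / real N) * \<sigma> (real j / real N)
                      * (\<epsilon> i j \<omega> - U\<^sub>\<epsilon> i j \<omega>)))\<bar>
       \<le> K * (real (nN N) powr \<beta>\<^sub>1 * real N powr (\<beta>\<^sub>2 - 1))"
proof -
  interpret prob_space M by (rule P)
  obtain L where L: "L \<ge> 0" and hol: "\<And>x y. x \<in> {0..1} \<Longrightarrow> y \<in> {0..1} \<Longrightarrow> \<bar>\<sigma> x - \<sigma> y\<bar> \<le> L * \<bar>x - y\<bar> powr \<nu>"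
  proof -
    from A2_sigma obtain D where Dc: "deriv_chain 0 \<sigma> D"
      and bdd: "bdd_above (hoelder_quot_set \<nu> (D 0))"
      unfolding in_hoelder_def by blast
    have D0: "\<And>x. x \<in> {0..1} \<Longrightarrow> D 0 x = \<sigma> x" using Dc unfolding deriv_chain_def by blast
    from bdd obtain L0 where L0: "\<And>z. z \<in> hoelder_quot_set \<nu> (D 0) \<Longrightarrow> z \<le> L0"
      unfolding bdd_above_def by auto
    have "\<bar>\<sigma> x - \<sigma> y\<bar> \<le> max L0 0 * \<bar>x - y\<bar> powr \<nu>" if xy: "x \<in> {0..1}" "y \<in> {0..1}" for x y
    proof (cases "x = y")
      case True then show ?thesis by simp
    next
      case False
      have pos: "\<bar>x - y\<bar> powr \<nu> > 0" using False by simp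
      have "\<bar>D 0 x - D 0 y\<bar> / \<bar>x - y\<bar> powr \<nu> \<in> hoelder_quot_set \<nu> (D 0)"
        unfolding hoelder_quot_set_def using xy False by blast
      then have "\<bar>\<sigma> x - \<sigma> y\<bar> / \<bar>x - y\<bar> powr \<nu> \<le> L0" using L0 D0 xy by auto
      then have "\<bar>\<sigma> x - \<sigma> y\<bar> \<le> L0 * \<bar>x - y\<bar> powr \<nu>" using pos by (simp add: pos_divide_le_eq)
      also have "\<dots> \<le> max L0 0 * \<bar>x - y\<bar> powr \<nu>" using pos by (intro mult_right_mono) auto
      finally show ?thesis .
    qed
    then show ?thesis by (intro that[of "max L0 0"]) auto
  qed
  define S where "S = \<bar>\<sigma> 0\<bar> + L"
  have sb: "\<bar>\<sigma> x\<bar> \<le> S" if x: "x \<in> {0..1}" for x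
  proof -
    have "\<bar>\<sigma> x - \<sigma> 0\<bar> \<le> L * \<bar>x - 0\<bar> powr \<nu>" using hol[OF x, of 0] by simp
    also have "\<dots> \<le> L * 1" using x A2_nu L by (intro mult_left_mono powr_le1) auto
    finally show ?thesis unfolding S_def by linarith
  qed
  have gl: "1 - \<nu> < \<gamma>" using A6_gamma_lo by simp
  obtain C1 where C1: "eventually (\<lambda>N. real N powr (1-\<nu>) \<le> C1 * (real (Js N) + 1)) sequentially"
    using asym_J[OF A6_Js A6_d_pos A6_d A6_tau gl] by blast
  have Ux: "U\<^sub>\<xi> i k \<in> borel_measurable M" if "i \<ge> 1" "k \<ge> 1" for i k
    using distributed_measurable[OF A5_gauss_xi[OF that]] by simp
  have Ue: "U\<^sub>\<epsilon> i j \<in> borel_measurable M" if "i \<ge> 1" "j \<ge> 1" for i j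
    using distributed_measurable[OF A5_gauss_eps[OF that]] by simp
  define Ex where "Ex n = {w\<in>space M. \<exists>k\<in>{1..kn n}. \<exists>t\<in>{1..n}.
         \<bar>\<Sum>i=1..t. \<xi> i k w - U\<^sub>\<xi> i k w\<bar> > real n powr \<beta>\<^sub>1}" for n
  define Ee where "Ee N = {w\<in>space M. \<exists>i\<in>{1..nN N}. \<exists>t\<in>{1..N}.
         \<bar>\<Sum>j=1..t. \<epsilon> i j w - U\<^sub>\<epsilon> i j w\<bar> > real N powr \<beta>\<^sub>2}" for N
  have Ex_meas: "Ex n \<in> sets M" for n
    unfolding Ex_def
    by (rule event_meas[where X = "\<lambda>k i w. \<xi> i k w - U\<^sub>\<xi> i k w"])
       (use xi_meas Ux in \<open>auto intro!: borel_measurable_diff\<close>)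
  have Ee_meas: "Ee N \<in> sets M" for N
    unfolding Ee_def
    by (rule event_meas[where X = "\<lambda>i j w. \<epsilon> i j w - U\<^sub>\<epsilon> i j w"])
       (use eps_meas Ue in \<open>auto intro!: borel_measurable_diff\<close>)
  have AEx: "AE w in M. eventually (\<lambda>n. w \<notin> Ex n) sequentially"
    by (rule bc_eventually[OF P Ex_meas _ A5_consts(3)]) (use A5_xi in \<open>auto simp: Ex_def\<close>)
  have AEe: "AE w in M. eventually (\<lambda>N. w \<notin> Ee N) sequentially"
    by (rule bc_eventually[OF P Ee_meas _ A5_consts(4)]) (use A5_eps in \<open>auto simp: Ee_def\<close>)
  define Q where "Q = S * 4 ^ p + 2 ^ p * L * (real p * C1 + 1) + 2 ^ p * S"
  show ?thesis
  proof (rule AE_mp[OF AE_conjI[OF AEx AEe]], rule AE_I2, rule impI)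
    fix w assume w: "w \<in> space M"
    assume ev: "eventually (\<lambda>n. w \<notin> Ex n) sequentially \<and> eventually (\<lambda>N. w \<notin> Ee N) sequentially"
    have ev1: "eventually (\<lambda>N. w \<notin> Ex (nN N)) sequentially"
      using ev A3_lim by (auto simp: filterlim_iff)
    have ev2: "eventually (\<lambda>N. nN N \<ge> 1) sequentially"
      using eventually_ge_at_top[of 1] A3_lim by (auto simp: filterlim_iff)
    have ev3: "eventually (\<lambda>N. N \<ge> (1::nat)) sequentially" by (rule eventually_ge_at_top)
    have "eventually (\<lambda>N. \<forall>k\<in>{1..kn (nN N)}. \<forall>l\<in>{1..Js N + p}.
       \<bar>1 / (real (nN N) * real N) * (\<Sum>i=1..nN N. (\<xi> i k w - U\<^sub>\<xi> i k w) *
          (\<Sum>j=1..N. Bspline (Js N) p l (real j / real N) * \<sigma> (real j / real N)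
                      * (\<epsilon> i j w - U\<^sub>\<epsilon> i j w)))\<bar>
       \<le> (2 * Q) * (real (nN N) powr \<beta>\<^sub>1 * real N powr (\<beta>\<^sub>2 - 1))) sequentially"
      using ev1 ev2 ev3 C1 conjunct2[OF ev]
    proof eventually_elim
      case (elim N)
      define n where "n = nN N"
      have n1: "n \<ge> 1" using elim(2) by (simp add: n_def)
      have xb: "\<bar>\<Sum>i=1..t. \<xi> i k w - U\<^sub>\<xi> i k w\<bar> \<le> real n powr \<beta>\<^sub>1"
        if "k \<in> {1..kn n}" "t \<in> {1..n}" for k t
        using elim(1) w that unfolding Ex_def n_def by force
      have eb: "\<bar>\<Sum>j=1..t. \<epsilon> i j w - U\<^sub>\<epsilon> i j w\<bar> \<le> real N powr \<beta>\<^sub>2"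
        if "i \<in> {1..n}" "t \<in> {1..N}" for i t
        using elim(5) w that unfolding Ee_def n_def by force
      show ?case unfolding n_def[symmetric]
      proof (intro ballI)
        fix k l assume k: "k \<in> {1..kn n}" and l: "l \<in> {1..Js N + p}"
        have Qb: "(\<Sum>j\<in>{1..<N}. \<bar>Bspline (Js N) p l (real (Suc j) / real N) * \<sigma> (real (Suc j) / real N)
                        - Bspline (Js N) p l (real j / real N) * \<sigma> (real j / real N)\<bar>)
          + \<bar>Bspline (Js N) p l (real N / real N) * \<sigma> (real N / real N)\<bar> \<le> Q"
          unfolding Q_def by (rule Q_bound[OF hol sb L A2_nu(1) elim(3) elim(4)])
        have main: "\<bar>\<Sum>i=1..n. (\<xi> i k w - U\<^sub>\<xi> i k w) *
          (\<Sum>j=1..N. Bspline (Js N) p l (real j / real N) * \<sigma> (real j / real N)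
                      * (\<epsilon> i j w - U\<^sub>\<epsilon> i j w))\<bar>
          \<le> real n * ((2 * real n powr \<beta>\<^sub>1) * (real N powr \<beta>\<^sub>2 * Q))"
          by (rule final_bound[where a = "\<lambda>i. \<xi> i k w - U\<^sub>\<xi> i k w"
                and e = "\<lambda>i j. \<epsilon> i j w - U\<^sub>\<epsilon> i j w"
                and b = "\<lambda>j. Bspline (Js N) p l (real j / real N) * \<sigma> (real j / real N)"])
             (use xb[OF k] eb Qb in auto)
        have np: "real n > 0" using n1 by simp
        have Np: "real N > 0" using elim(3) by simp
        have pw: "real N powr (\<beta>\<^sub>2 - 1) = real N powr \<beta>\<^sub>2 / real N"
          using Np by (simp add: powr_diff)
        show "\<bar>1 / (real n * real N) * (\<Sum>i=1..n. (\<xi> i k w - U\<^sub>\<xi> i k w) *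
          (\<Sum>j=1..N. Bspline (Js N) p l (real j / real N) * \<sigma> (real j / real N)
                      * (\<epsilon> i j w - U\<^sub>\<epsilon> i j w)))\<bar>
          \<le> (2 * Q) * (real n powr \<beta>\<^sub>1 * real N powr (\<beta>\<^sub>2 - 1))"
        proof -
          define X where "X = (\<Sum>i=1..n. (\<xi> i k w - U\<^sub>\<xi> i k w) *
            (\<Sum>j=1..N. Bspline (Js N) p l (real j / real N) * \<sigma> (real j / real N)
                      * (\<epsilon> i j w - U\<^sub>\<epsilon> i j w)))"
          have "\<bar>1 / (real n * real N) * X\<bar> = 1 / (real n * real N) * \<bar>X\<bar>"
            using np Np by (simp add: abs_mult)
          also have "\<dots> \<le> 1 / (real n * real N) * (real n * ((2 * real n powr \<beta>\<^sub>1) * (real N powr \<beta>\<^sub>2 * Q)))"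
            by (rule mult_left_mono) (use main np Np in \<open>simp_all add: X_def\<close>)
          also have "\<dots> = (2 * Q) * (real n powr \<beta>\<^sub>1 * real N powr (\<beta>\<^sub>2 - 1))"
            unfolding pw using np Np by (simp add: field_simps)
          finally show ?thesis unfolding X_def .
        qed
      qed
    qed
    then show "\<exists>K. \<forall>\<^sub>F N in sequentially. \<forall>k\<in>{1..kn (nN N)}. \<forall>l\<in>{1..Js N + p}.
       \<bar>1 / (real (nN N) * real N) * (\<Sum>i=1..nN N. (\<xi> i k w - U\<^sub>\<xi> i k w) *
          (\<Sum>j=1..N. Bspline (Js N) p l (real j / real N) * \<sigma> (real j / real N)
                      * (\<epsilon> i j w - U\<^sub>\<epsilon> i j w)))\<bar>
       \<le> K * (real (nN N) powr \<beta>\<^sub>1 * real N powr (\<beta>\<^sub>2 - 1))" by blast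
  qed
qed

end
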